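(* Let $m\ge3$, $C$ a set of $m$ candidates, $T$ the set of all $m!$ strict rankings of $C$, $w=(w_1,\dots,w_m)$ with $1=w_1\ge\cdots\ge w_m=0$, $\bar w=(w_1+\cdots+w_m)/m$, and $\sigma_t(\alpha)=w_i$ where $i$ is the position of $\alpha$ in $t\in T$. Let $(N_t)_{t\in T}$ be nonnegative integers with $\sum_tN_t=n$ and $|\alpha|=\sum_tN_t\sigma_t(\alpha)$. Suppose $|a|>|\alpha|$ for all $\alpha\ne a$, and $b\ne a$ satisfies $|b|\ge|\alpha|$ for all $\alpha\ne a$. Let $T_b$ be the set of types ranking $b$ first, $T_i$ ($1\le i\le m-1$) the set of types ranking $b$ in position $i$ and $a$ in position $i+1$, and $T_{ba}=\bigcup_iT_i$. Consider the linear programs (P2): $\min\sum_{t\in T_{ba}}x_t$ s.t. $\sum_{t\in T_b}y_t(1-\sigma_t(\alpha))-\sum_{t\in T_{ba}}x_t(\sigma_t(b)-\sigma_t(\alpha))\ge|\alpha|-|b|$ for all $\alpha\ne b$, $\sum_{t\in T_b}y_t=\sum_{t\in T_{ba}}x_t$, $x_t\ge0$, $y_t\ge0$; (P4): $\min\sum_{i=1}^{m-1}z_i$ s.t. $\sum_{i=1}^{m-1}(1-w_i+w_{i+1})z_i\ge|a|-|b|$, $\sum_{i=1}^{m-1}(1-w_i)z_i\ge n\bar w-|b|$, $z_i\ge0$; (P5): $\max\ (|a|-n\bar w)\lambda+(n\bar w-|b|)\mu$ s.t. $w_{i+1}\lambda+(1-w_i)\mu\le1$ for $i=1,\dots,m-1$,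 and $0\le\lambda\le\mu$. Then (P2) and (P4) have the same optimal value as (P5). Moreover, (P5) is unbounded if and only if (P2) and (P4) are infeasible. *)

theory Defs
  imports "HOL-Analysis.Analysis"
begin

text \<open>Strict rankings (types) of a candidate set C: lists enumerating C without repetition;
  the first list entry is ranked first.\<close>
definition rankings :: "'c set \<Rightarrow> 'c list set" where
  "rankings C = {t. distinct t \<and> set t = C}"

definition pos :: "'c list \<Rightarrow> 'c \<Rightarrow> nat" where
  "pos t \<alpha> = Suc (LEAST i. i < length t \<and> t ! i = \<alpha>)"

definition sigma :: "(nat \<Rightarrow> real) \<Rightarrow> 'c list \<Rightarrow> 'c \<Rightarrow> real" where
  "sigma w t \<alpha> = w (pos t \<alpha>)"

definition score :: "'c set \<Rightarrow> (nat \<Rightarrow> real) \<Rightarrow> ('c list \<Rightarrow> nat) \<Rightarrow> 'c \<Rightarrow> real" where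
  "score C w N \<alpha> = (\<Sum>t\<in>rankings C. real (N t) * sigma w t \<alpha>)"

definition Tb :: "'c set \<Rightarrow> 'c \<Rightarrow> 'c list set" where
  "Tb C b = {t \<in> rankings C. pos t b = 1}"

definition Tba :: "'c set \<Rightarrow> nat \<Rightarrow> 'c \<Rightarrow> 'c \<Rightarrow> 'c list set" where
  "Tba C m a b = (\<Union>i\<in>{1..m-1}. {t \<in> rankings C. pos t b = i \<and> pos t a = i + 1})"

definition wbar :: "(nat \<Rightarrow> real) \<Rightarrow> nat \<Rightarrow> real" where
  "wbar w m = (\<Sum>i=1..m. w i) / real m"

definition total :: "'c set \<Rightarrow> ('c list \<Rightarrow> nat) \<Rightarrow> nat" where
  "total C N = (\<Sum>t\<in>rankings C. N t)"

text \<open>Feasible set of (P2); the variables x_t (t in T_ba) and y_t (t in T_b) are given as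
  functions on all lists, only their values on T_ba resp. T_b matter.\<close>
definition feas2 :: "'c set \<Rightarrow> nat \<Rightarrow> (nat \<Rightarrow> real) \<Rightarrow> ('c list \<Rightarrow> nat) \<Rightarrow> 'c \<Rightarrow> 'c
    \<Rightarrow> ('c list \<Rightarrow> real) \<Rightarrow> ('c list \<Rightarrow> real) \<Rightarrow> bool" where
  "feas2 C m w N a b x y \<longleftrightarrow>
     (\<forall>\<alpha>\<in>C. \<alpha> \<noteq> b \<longrightarrow>
        (\<Sum>t\<in>Tb C b. y t * (1 - sigma w t \<alpha>))
          - (\<Sum>t\<in>Tba C m a b. x t * (sigma w t b - sigma w t \<alpha>))
        \<ge> score C w N \<alpha> - score C w N b)
     \<and> (\<Sum>t\<in>Tb C b. y t) = (\<Sum>t\<in>Tba C m a b. x t)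
     \<and> (\<forall>t\<in>Tba C m a b. x t \<ge> 0) \<and> (\<forall>t\<in>Tb C b. y t \<ge> 0)"

definition feas4 :: "'c set \<Rightarrow> nat \<Rightarrow> (nat \<Rightarrow> real) \<Rightarrow> ('c list \<Rightarrow> nat) \<Rightarrow> 'c \<Rightarrow> 'c
    \<Rightarrow> (nat \<Rightarrow> real) \<Rightarrow> bool" where
  "feas4 C m w N a b z \<longleftrightarrow>
     (\<Sum>i=1..m-1. (1 - w i + w (i+1)) * z i) \<ge> score C w N a - score C w N b
     \<and> (\<Sum>i=1..m-1. (1 - w i) * z i) \<ge> real (total C N) * wbar w m - score C w N b
     \<and> (\<forall>i\<in>{1..m-1}. z i \<ge> 0)"

definition feas5 :: "nat \<Rightarrow> (nat \<Rightarrow> real) \<Rightarrow> real \<Rightarrow> real \<Rightarrow> bool" where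
  "feas5 m w l u \<longleftrightarrow>
     (\<forall>i\<in>{1..m-1}. w (i+1) * l + (1 - w i) * u \<le> 1) \<and> 0 \<le> l \<and> l \<le> u"

definition obj5 :: "'c set \<Rightarrow> nat \<Rightarrow> (nat \<Rightarrow> real) \<Rightarrow> ('c list \<Rightarrow> nat) \<Rightarrow> 'c \<Rightarrow> 'c
    \<Rightarrow> real \<Rightarrow> real \<Rightarrow> real" where
  "obj5 C m w N a b l u =
     (score C w N a - real (total C N) * wbar w m) * l
     + (real (total C N) * wbar w m - score C w N b) * u"

text \<open>Optimal values in the extended reals: a minimisation problem has value Inf of the
  objective over its feasible set (= +infinity if infeasible); (P5) has value Sup
  (= +infinity if unbounded).\<close>
definition val2 :: "'c set \<Rightarrow> nat \<Rightarrow> (nat \<Rightarrow> real) \<Rightarrow> ('c list \<Rightarrow> nat) \<Rightarrow> 'c \<Rightarrow> 'c \<Rightarrow> ereal" where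
  "val2 C m w N a b = Inf {ereal (\<Sum>t\<in>Tba C m a b. x t) | x y. feas2 C m w N a b x y}"

definition val4 :: "'c set \<Rightarrow> nat \<Rightarrow> (nat \<Rightarrow> real) \<Rightarrow> ('c list \<Rightarrow> nat) \<Rightarrow> 'c \<Rightarrow> 'c \<Rightarrow> ereal" where
  "val4 C m w N a b = Inf {ereal (\<Sum>i=1..m-1. z i) | z. feas4 C m w N a b z}"

definition val5 :: "'c set \<Rightarrow> nat \<Rightarrow> (nat \<Rightarrow> real) \<Rightarrow> ('c list \<Rightarrow> nat) \<Rightarrow> 'c \<Rightarrow> 'c \<Rightarrow> ereal" where
  "val5 C m w N a b = Sup {ereal (obj5 C m w N a b l u) | l u. feas5 m w l u}"

end

theory Submission
  imports Defs
begin


lemma rank_distinct: "t \<in> rankings C \<Longrightarrow> distinct t" and rank_set: "t \<in> rankings C \<Longrightarrow> set t = C"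
  by (auto simp: rankings_def)

lemma rank_len: "t \<in> rankings C \<Longrightarrow> length t = card C"
  by (metis distinct_card rank_distinct rank_set)

lemma pos_nth: assumes "t \<in> rankings C" "i < length t" shows "pos t (t ! i) = Suc i"
proof -
  have d: "distinct t" using assms rank_distinct by blast
  have "(LEAST j. j < length t \<and> t ! j = t ! i) = i"
  proof (rule Least_equality)
    show "i < length t \<and> t ! i = t ! i" using assms by simp
    fix j assume "j < length t \<and> t ! j = t ! i"
    then have "j = i" using d assms nth_eq_iff_index_eq by blast
    then show "i \<le> j" by simp
  qed
  then show ?thesis by (simp add: pos_def)
qed

lemma pos_ex: assumes "t \<in> rankings C" "x \<in> C"
  shows "\<exists>i<length t. t ! i = x \<and> pos t x = Suc i"
proof -
  have "x \<in> set t" using assms rank_set by blast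
  then obtain i where "i < length t" "t ! i = x" by (auto simp: in_set_conv_nth)
  then show ?thesis using pos_nth[OF assms(1)] by blast
qed

lemma pos_range: assumes "t \<in> rankings C" "x \<in> C"
  shows "1 \<le> pos t x" "pos t x \<le> card C"
  using pos_ex[OF assms] rank_len[OF assms(1)] by auto

lemma pos_inj: assumes "t \<in> rankings C" shows "inj_on (pos t) C"
proof
  fix x y assume "x \<in> C" "y \<in> C" "pos t x = pos t y"
  then show "x = y" using pos_ex[OF assms \<open>x\<in>C\<close>] pos_ex[OF assms \<open>y\<in>C\<close>] by auto
qed

lemma pos_bij: assumes "t \<in> rankings C" shows "bij_betw (pos t) C {1..card C}"
proof -
  have "pos t ` C = {1..card C}"
  proof
    show "pos t ` C \<subseteq> {1..card C}" using pos_range[OF assms] by auto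
    show "{1..card C} \<subseteq> pos t ` C"
    proof
      fix k assume k: "k \<in> {1..card C}"
      then have "k - 1 < length t" using rank_len[OF assms] by auto
      then have "pos t (t ! (k-1)) = k" "t ! (k-1) \<in> C"
        using pos_nth[OF assms] k rank_set[OF assms] by auto
      then show "k \<in> pos t ` C" by force
    qed
  qed
  then show ?thesis using pos_inj[OF assms] by (simp add: bij_betw_def)
qed

lemma pos_sum: assumes "t \<in> rankings C"
  shows "(\<Sum>x\<in>C. f (pos t x)) = (\<Sum>k=1..card C. f k)"
  using sum.reindex_bij_betw[OF pos_bij[OF assms], of f] by simp

lemma map_rank: assumes "t \<in> rankings C" "\<forall>x\<in>C. f x \<in> C \<and> f (f x) = x"
  shows "map f t \<in> rankings C"
proof -
  have inj: "inj_on f C" using assms(2) by (metis inj_onI)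
  have "f ` C = C" using assms(2) by (metis image_subset_iff subsetI subset_antisym imageI)
  then show ?thesis using assms(1) inj by (auto simp: rankings_def distinct_map)
qed

lemma pos_map: assumes "t \<in> rankings C" "\<forall>x\<in>C. f x \<in> C \<and> f (f x) = x" "x \<in> C"
  shows "pos (map f t) x = pos t (f x)"
proof -
  obtain i where i: "i < length t" "t ! i = f x" "pos t (f x) = Suc i"
    using pos_ex[OF assms(1)] assms(2,3) by blast
  have "(map f t) ! i = x" using i assms(2,3) by simp
  then show ?thesis using pos_nth[OF map_rank[OF assms(1,2)], of i] i by simp
qed

definition tr :: "'c \<Rightarrow> 'c \<Rightarrow> 'c \<Rightarrow> 'c" where
  "tr x y z = (if z = x then y else if z = y then x else z)"

lemma tr_ok: "x \<in> C \<Longrightarrow> y \<in> C \<Longrightarrow> \<forall>z\<in>C. tr x y z \<in> C \<and> tr x y (tr x y z) = z"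
  by (auto simp: tr_def)

lemma finite_rankings: "finite C \<Longrightarrow> finite (rankings C)"
proof -
  assume f: "finite C"
  have "rankings C \<subseteq> {xs. set xs \<subseteq> C \<and> length xs \<le> card C}"
    by (auto simp: rankings_def distinct_card)
  then show ?thesis using finite_lists_length_le[OF f] finite_subset by blast
qed

lemma rankings_ne: "finite C \<Longrightarrow> \<exists>t. t \<in> rankings C"
  using finite_distinct_list by (auto simp: rankings_def)

lemma place: assumes "t \<in> rankings C" "x \<in> C" "P \<Longrightarrow> 1 \<le> p \<and> p \<le> card C"
  shows "\<exists>t'\<in>rankings C. (P \<longrightarrow> pos t' x = p) \<and> (\<forall>z\<in>C. (\<not> P \<or> z \<noteq> x \<and> pos t z \<noteq> p) \<longrightarrow> pos t' z = pos t z)"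
proof (cases P)
  case False then show ?thesis using assms(1) by blast
next
  case True
  then have p: "p - 1 < length t" "1 \<le> p" using assms(3) rank_len[OF assms(1)] by auto
  define y where "y = t ! (p - 1)"
  have y: "y \<in> C" "pos t y = p" using p pos_nth[OF assms(1)] rank_set[OF assms(1)] y_def by auto
  have ok: "\<forall>z\<in>C. tr x y z \<in> C \<and> tr x y (tr x y z) = z" using tr_ok[OF assms(2) y(1)] .
  show ?thesis
  proof (intro bexI conjI impI ballI)
    show "map (tr x y) t \<in> rankings C" using map_rank[OF assms(1) ok] .
    have "tr x y x = y" by (simp add: tr_def)
    then show "pos (map (tr x y) t) x = p" using pos_map[OF assms(1) ok assms(2)] y by simp
    fix z assume "z \<in> C" "\<not> P \<or> z \<noteq> x \<and> pos t z \<noteq> p"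
    then have "tr x y z = z" using y True by (auto simp: tr_def)
    then show "pos (map (tr x y) t) z = pos t z" using pos_map[OF assms(1) ok \<open>z \<in> C\<close>] by simp
  qed
qed

lemma exists_t0:
  assumes fin: "finite C" and cm: "card C = m" and a: "a \<in> C" and b: "b \<in> C" and ab: "a \<noteq> b"
    and i: "1 \<le> i" "i + 1 \<le> m" and ul: "u \<in> C - {a,b}" "l \<in> C - {a,b}"
  shows "\<exists>t\<in>rankings C. pos t b = i \<and> pos t a = i + 1 \<and> (2 \<le> i \<longrightarrow> pos t u = 1)
           \<and> (i + 2 \<le> m \<and> (2 \<le> i \<longrightarrow> u \<noteq> l) \<longrightarrow> pos t l = m)"
proof -
  have uC: "u \<in> C" and lC: "l \<in> C" using ul by auto
  obtain t1 where t1: "t1 \<in> rankings C" using rankings_ne[OF fin] by blast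
  have pr1: "2 \<le> i \<Longrightarrow> 1 \<le> (1::nat) \<and> 1 \<le> card C" using cm i by auto
  obtain t2 where t2: "t2 \<in> rankings C" "2 \<le> i \<longrightarrow> pos t2 u = 1"
    using place[OF t1 uC pr1] by blast
  have pr2: "i + 2 \<le> m \<and> (2 \<le> i \<longrightarrow> u \<noteq> l) \<Longrightarrow> 1 \<le> m \<and> m \<le> card C" using cm i by auto
  obtain t3 where t3: "t3 \<in> rankings C" "i + 2 \<le> m \<and> (2 \<le> i \<longrightarrow> u \<noteq> l) \<longrightarrow> pos t3 l = m"
     "\<forall>z\<in>C. (\<not> (i + 2 \<le> m \<and> (2 \<le> i \<longrightarrow> u \<noteq> l)) \<or> z \<noteq> l \<and> pos t2 z \<noteq> m) \<longrightarrow> pos t3 z = pos t2 z"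
    using place[OF t2(1) lC pr2] by blast
  have t3u: "pos t3 u = 1" if "2 \<le> i"
  proof -
    have "pos t2 u = 1" using t2 that by blast
    moreover have "(\<not> (i + 2 \<le> m \<and> (2 \<le> i \<longrightarrow> u \<noteq> l)) \<or> u \<noteq> l \<and> pos t2 u \<noteq> m)" using that calculation i by auto
    ultimately show ?thesis using t3(3) uC by auto
  qed
  have pr3: "True \<Longrightarrow> 1 \<le> i \<and> i \<le> card C" using cm i by auto
  obtain t4 where t4: "t4 \<in> rankings C" "True \<longrightarrow> pos t4 b = i"
     "\<forall>z\<in>C. (\<not> True \<or> z \<noteq> b \<and> pos t3 z \<noteq> i) \<longrightarrow> pos t4 z = pos t3 z"
    using place[OF t3(1) b pr3] by blast
  have t4u: "pos t4 u = 1" if "2 \<le> i"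
    using t4(3) uC ul t3u[OF that] that by auto
  have t4l: "pos t4 l = m" if "i + 2 \<le> m \<and> (2 \<le> i \<longrightarrow> u \<noteq> l)"
    using t4(3) lC ul t3(2) that by auto
  have pr4: "True \<Longrightarrow> 1 \<le> i + 1 \<and> i + 1 \<le> card C" using cm i by auto
  obtain t5 where t5: "t5 \<in> rankings C" "True \<longrightarrow> pos t5 a = i + 1"
     "\<forall>z\<in>C. (\<not> True \<or> z \<noteq> a \<and> pos t4 z \<noteq> i + 1) \<longrightarrow> pos t5 z = pos t4 z"
    using place[OF t4(1) a pr4] by blast
  show ?thesis
  proof (intro bexI conjI impI)
    show "t5 \<in> rankings C" by fact
    show "pos t5 b = i" using t5(3) t4(2) b ab by auto
    show "pos t5 a = i + 1" using t5(2) by simp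
    show "pos t5 u = 1" if "2 \<le> i" using t5(3) t4u[OF that] that ul by auto
    show "pos t5 l = m" if "i + 2 \<le> m \<and> (2 \<le> i \<longrightarrow> u \<noteq> l)" using t5(3) t4l[OF that] that ul by auto
  qed
qed


locale S11 =
  fixes C :: "'c set" and m :: nat and w :: "nat \<Rightarrow> real"
    and N :: "'c list \<Rightarrow> nat" and a b :: 'c
  assumes m3: "m \<ge> 3"
    and cm: "card C = m"
    and w1: "w 1 = 1" and wm: "w m = 0"
    and mono: "\<And>i j. 1 \<le> i \<Longrightarrow> i \<le> j \<Longrightarrow> j \<le> m \<Longrightarrow> w j \<le> w i"
    and aC: "a \<in> C" and bC: "b \<in> C" and ba: "b \<noteq> a"
    and awin: "\<And>\<alpha>. \<alpha> \<in> C \<Longrightarrow> \<alpha> \<noteq> a \<Longrightarrow> score C w N a > score C w N \<alpha>"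
    and bsec: "\<And>\<alpha>. \<alpha> \<in> C \<Longrightarrow> \<alpha> \<noteq> a \<Longrightarrow> score C w N b \<ge> score C w N \<alpha>"
begin

abbreviation "sc \<equiv> score C w N"
abbreviation "I \<equiv> {1..m-1}"
definition "WW = (\<Sum>k=1..m. w k)"
abbreviation "n \<equiv> real (total C N)"

lemma fin: "finite C" by (rule card_ge_0_finite) (use cm m3 in simp)

lemma swap_mult: fixes y :: "'t \<Rightarrow> real" shows "(\<Sum>\<alpha>\<in>A. \<Sum>t\<in>T. y t * g t \<alpha>) = (\<Sum>t\<in>T. y t * (\<Sum>\<alpha>\<in>A. g t \<alpha>))"
  by (subst sum.swap) (simp add: sum_distrib_left)

lemma w01: "1 \<le> k \<Longrightarrow> k \<le> m \<Longrightarrow> 0 \<le> w k \<and> w k \<le> 1"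
  using mono[of 1 k] mono[of k m] w1 wm m3 by auto

lemma sig01: "t \<in> rankings C \<Longrightarrow> x \<in> C \<Longrightarrow> 0 \<le> sigma w t x \<and> sigma w t x \<le> 1"
  unfolding sigma_def using w01 pos_range[of t C x] cm by auto

lemma sigsum: "t \<in> rankings C \<Longrightarrow> (\<Sum>x\<in>C. sigma w t x) = WW"
  unfolding sigma_def WW_def using pos_sum[of t C w] cm by simp

lemma scsum: "(\<Sum>x\<in>C. sc x) = n * WW"
proof -
  have "(\<Sum>x\<in>C. sc x) = (\<Sum>t\<in>rankings C. real (N t) * (\<Sum>x\<in>C. sigma w t x))"
    unfolding score_def by (simp add: sum.swap[of _ C] sum_distrib_left)
  also have "\<dots> = (\<Sum>t\<in>rankings C. real (N t) * WW)" using sigsum by simp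
  also have "\<dots> = n * WW" by (simp add: total_def sum_distrib_right)
  finally show ?thesis .
qed

lemma wbar_eq: "wbar w m = WW / m" unfolding wbar_def WW_def by simp

lemma finR: "finite (rankings C)" using finite_rankings fin by blast

lemma Tb_sub: "Tb C b \<subseteq> rankings C" unfolding Tb_def by auto
lemma Tba_sub: "Tba C m a b \<subseteq> rankings C" unfolding Tba_def by auto
lemma finTb: "finite (Tb C b)" using Tb_sub finR finite_subset by blast
lemma finTba: "finite (Tba C m a b)" using Tba_sub finR finite_subset by blast

lemma Tba_pos: "t \<in> Tba C m a b \<Longrightarrow> pos t b \<in> I \<and> pos t a = pos t b + 1"
  unfolding Tba_def by auto

lemma Tb_sig: "t \<in> Tb C b \<Longrightarrow> sigma w t b = 1"
  unfolding Tb_def sigma_def using w1 by auto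

lemma sum_Tba_group: fixes x :: "'c list \<Rightarrow> real" and f :: "nat \<Rightarrow> real" shows
  "(\<Sum>t\<in>Tba C m a b. x t * f (pos t b)) = (\<Sum>i\<in>I. (\<Sum>t\<in>{t\<in>Tba C m a b. pos t b = i}. x t) * f i)"
proof -
  have "(\<Sum>t\<in>Tba C m a b. x t * f (pos t b)) = (\<Sum>i\<in>I. \<Sum>t\<in>{t\<in>Tba C m a b. pos t b = i}. x t * f (pos t b))"
    by (rule sum.group[symmetric]) (use finTba Tba_pos in auto)
  also have "\<dots> = (\<Sum>i\<in>I. (\<Sum>t\<in>{t\<in>Tba C m a b. pos t b = i}. x t) * f i)"
  proof (rule sum.cong[OF refl])
    fix i assume "i \<in> I"
    have "(\<Sum>t\<in>{t\<in>Tba C m a b. pos t b = i}. x t * f (pos t b)) = (\<Sum>t\<in>{t\<in>Tba C m a b. pos t b = i}. x t * f i)"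
      by (rule sum.cong) auto
    then show "(\<Sum>t\<in>{t\<in>Tba C m a b. pos t b = i}. x t * f (pos t b)) = (\<Sum>t\<in>{t\<in>Tba C m a b. pos t b = i}. x t) * f i"
      by (simp add: sum_distrib_right)
  qed
  finally show ?thesis .
qed

lemma sum_minus_b: fixes f :: "'c \<Rightarrow> real" shows "(\<Sum>x\<in>C-{b}. f x) = (\<Sum>x\<in>C. f x) - f b"
  using sum_diff1[OF fin, of f b] bC by simp

lemma p2_to_p4:
  assumes f2: "feas2 C m w N a b x y"
  defines "z \<equiv> (\<lambda>i. \<Sum>t\<in>{t\<in>Tba C m a b. pos t b = i}. x t)"
  shows "feas4 C m w N a b z \<and> (\<Sum>i=1..m-1. z i) = (\<Sum>t\<in>Tba C m a b. x t)"
proof -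
  have cons: "\<And>\<alpha>. \<alpha> \<in> C \<Longrightarrow> \<alpha> \<noteq> b \<Longrightarrow>
        (\<Sum>t\<in>Tb C b. y t * (1 - sigma w t \<alpha>)) - (\<Sum>t\<in>Tba C m a b. x t * (sigma w t b - sigma w t \<alpha>))
        \<ge> sc \<alpha> - sc b"
    and eq: "(\<Sum>t\<in>Tb C b. y t) = (\<Sum>t\<in>Tba C m a b. x t)"
    and xp: "\<forall>t\<in>Tba C m a b. x t \<ge> 0" and yp: "\<forall>t\<in>Tb C b. y t \<ge> 0"
    using f2 unfolding feas2_def by auto
  have tot: "(\<Sum>i=1..m-1. z i) = (\<Sum>t\<in>Tba C m a b. x t)"
    using sum_Tba_group[of x "\<lambda>_. 1"] unfolding z_def by simp
  have sigb: "t \<in> Tba C m a b \<Longrightarrow> sigma w t b = w (pos t b)" for t by (simp add: sigma_def)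
  have siga: "t \<in> Tba C m a b \<Longrightarrow> sigma w t a = w (pos t b + 1)" for t
    using Tba_pos by (simp add: sigma_def)
  have c1: "(\<Sum>i=1..m-1. (1 - w i + w (i+1)) * z i) \<ge> sc a - sc b"
  proof -
    have "sc a - sc b \<le> (\<Sum>t\<in>Tb C b. y t * (1 - sigma w t a)) - (\<Sum>t\<in>Tba C m a b. x t * (sigma w t b - sigma w t a))"
      using cons[of a] aC ba by auto
    also have "(\<Sum>t\<in>Tb C b. y t * (1 - sigma w t a)) \<le> (\<Sum>t\<in>Tb C b. y t)"
      by (rule sum_mono) (use yp sig01 aC Tb_sub in \<open>auto intro!: mult_left_le\<close>)
    then have "(\<Sum>t\<in>Tb C b. y t * (1 - sigma w t a)) - (\<Sum>t\<in>Tba C m a b. x t * (sigma w t b - sigma w t a))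
        \<le> (\<Sum>t\<in>Tba C m a b. x t) - (\<Sum>t\<in>Tba C m a b. x t * (sigma w t b - sigma w t a))"
      using eq by linarith
    also have "\<dots> = (\<Sum>t\<in>Tba C m a b. x t * (1 - w (pos t b) + w (pos t b + 1)))"
      by (simp add: sum_subtractf[symmetric] sigb siga algebra_simps)
    also have "\<dots> = (\<Sum>i=1..m-1. z i * (1 - w i + w (i+1)))"
      using sum_Tba_group[of x "\<lambda>i. 1 - w i + w (i+1)"] unfolding z_def by simp
    finally show ?thesis by (simp add: mult.commute)
  qed
  have c2: "(\<Sum>i=1..m-1. (1 - w i) * z i) \<ge> n * wbar w m - sc b"
  proof -
    have "(\<Sum>\<alpha>\<in>C-{b}. sc \<alpha> - sc b) \<le> (\<Sum>\<alpha>\<in>C-{b}. (\<Sum>t\<in>Tb C b. y t * (1 - sigma w t \<alpha>)) - (\<Sum>t\<in>Tba C m a b. x t * (sigma w t b - sigma w t \<alpha>)))"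
      by (rule sum_mono) (use cons in auto)
    also have "\<dots> = (\<Sum>t\<in>Tb C b. y t * (\<Sum>\<alpha>\<in>C-{b}. 1 - sigma w t \<alpha>)) - (\<Sum>t\<in>Tba C m a b. x t * (\<Sum>\<alpha>\<in>C-{b}. sigma w t b - sigma w t \<alpha>))"
    proof -
      have "(\<Sum>\<alpha>\<in>C-{b}. (\<Sum>t\<in>Tb C b. y t * (1 - sigma w t \<alpha>)) - (\<Sum>t\<in>Tba C m a b. x t * (sigma w t b - sigma w t \<alpha>)))
         = (\<Sum>\<alpha>\<in>C-{b}. \<Sum>t\<in>Tb C b. y t * (1 - sigma w t \<alpha>)) - (\<Sum>\<alpha>\<in>C-{b}. \<Sum>t\<in>Tba C m a b. x t * (sigma w t b - sigma w t \<alpha>))"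
        by (rule sum_subtractf)
      moreover have "(\<Sum>\<alpha>\<in>C-{b}. \<Sum>t\<in>Tb C b. y t * (1 - sigma w t \<alpha>)) = (\<Sum>t\<in>Tb C b. y t * (\<Sum>\<alpha>\<in>C-{b}. 1 - sigma w t \<alpha>))"
        by (rule swap_mult)
      moreover have "(\<Sum>\<alpha>\<in>C-{b}. \<Sum>t\<in>Tba C m a b. x t * (sigma w t b - sigma w t \<alpha>)) = (\<Sum>t\<in>Tba C m a b. x t * (\<Sum>\<alpha>\<in>C-{b}. sigma w t b - sigma w t \<alpha>))"
        by (rule swap_mult)
      ultimately show ?thesis by simp
    qed
    also have "\<dots> = (\<Sum>t\<in>Tb C b. y t * (real m - WW)) - (\<Sum>t\<in>Tba C m a b. x t * (real m * sigma w t b - WW))"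
    proof -
      have e1: "(\<Sum>\<alpha>\<in>C-{b}. 1 - sigma w t \<alpha>) = real m - WW" if "t \<in> Tb C b" for t
      proof -
        have "(\<Sum>\<alpha>\<in>C-{b}. 1 - sigma w t \<alpha>) = (\<Sum>\<alpha>\<in>C. 1 - sigma w t \<alpha>) - (1 - sigma w t b)"
          by (rule sum_minus_b)
        also have "\<dots> = real m - WW" using sigsum[of t] Tb_sub that Tb_sig[OF that] cm
          by (auto simp: sum_subtractf)
        finally show ?thesis .
      qed
      have e2: "(\<Sum>\<alpha>\<in>C-{b}. sigma w t b - sigma w t \<alpha>) = real m * sigma w t b - WW" if "t \<in> Tba C m a b" for t
      proof -
        have "(\<Sum>\<alpha>\<in>C-{b}. sigma w t b - sigma w t \<alpha>) = (\<Sum>\<alpha>\<in>C. sigma w t b - sigma w t \<alpha>) - (sigma w t b - sigma w t b)"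
          by (rule sum_minus_b)
        also have "\<dots> = real m * sigma w t b - WW" using sigsum[of t] Tba_sub that cm
          by (auto simp: sum_subtractf)
        finally show ?thesis .
      qed
      have "(\<Sum>t\<in>Tb C b. y t * (\<Sum>\<alpha>\<in>C-{b}. 1 - sigma w t \<alpha>)) = (\<Sum>t\<in>Tb C b. y t * (real m - WW))"
        by (rule sum.cong) (auto simp: e1)
      moreover have "(\<Sum>t\<in>Tba C m a b. x t * (\<Sum>\<alpha>\<in>C-{b}. sigma w t b - sigma w t \<alpha>)) = (\<Sum>t\<in>Tba C m a b. x t * (real m * sigma w t b - WW))"
        by (rule sum.cong) (auto simp: e2)
      ultimately show ?thesis by simp
    qed
    also have "\<dots> = real m * (\<Sum>t\<in>Tba C m a b. x t * (1 - sigma w t b))"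
    proof -
      have h1: "(\<Sum>t\<in>Tb C b. y t * (real m - WW)) = (\<Sum>t\<in>Tb C b. y t) * (real m - WW)"
        by (simp add: sum_distrib_right)
      have h2: "(\<Sum>t\<in>Tba C m a b. x t * (real m * sigma w t b - WW)) = real m * (\<Sum>t\<in>Tba C m a b. x t * sigma w t b) - (\<Sum>t\<in>Tba C m a b. x t) * WW"
        by (simp add: sum_subtractf sum_distrib_left sum_distrib_right algebra_simps)
      have h3: "(\<Sum>t\<in>Tba C m a b. x t * (1 - sigma w t b)) = (\<Sum>t\<in>Tba C m a b. x t) - (\<Sum>t\<in>Tba C m a b. x t * sigma w t b)"
        by (simp add: sum_subtractf algebra_simps)
      show ?thesis unfolding h1 h2 h3 eq by (simp add: algebra_simps)
    qed
    also have "(\<Sum>t\<in>Tba C m a b. x t * (1 - sigma w t b)) = (\<Sum>i=1..m-1. z i * (1 - w i))"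
      using sum_Tba_group[of x "\<lambda>i. 1 - w i"] sigb unfolding z_def by simp
    finally have *: "(\<Sum>\<alpha>\<in>C-{b}. sc \<alpha> - sc b) \<le> real m * (\<Sum>i=1..m-1. (1 - w i) * z i)"
      by (simp add: mult.commute)
    have "(\<Sum>\<alpha>\<in>C-{b}. sc \<alpha> - sc b) = n * WW - real m * sc b"
      using sum_minus_b[of "\<lambda>\<alpha>. sc \<alpha> - sc b"] scsum cm fin
      by (simp add: sum_subtractf)
    with * have "n * WW - real m * sc b \<le> real m * (\<Sum>i=1..m-1. (1 - w i) * z i)" by simp
    moreover have "real m > 0" using m3 by simp
    ultimately show ?thesis unfolding wbar_eq
      by (simp add: field_simps)
  qed
  have zp: "\<forall>i\<in>{1..m-1}. z i \<ge> 0" unfolding z_def using xp by (auto intro!: sum_nonneg)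
  show ?thesis using c1 c2 zp tot unfolding feas4_def by auto
qed

end


lemma transfer_sum:
  fixes om F :: "_ \<Rightarrow> real"
  assumes "finite T" "finite J" "\<And>j. j \<in> J \<Longrightarrow> f j \<in> T"
  shows "(\<Sum>t\<in>T. (\<Sum>j\<in>J. om j * (if f j = t then 1 else 0)) * F t) = (\<Sum>j\<in>J. om j * F (f j))"
proof -
  have e: "(\<Sum>j\<in>J. om j * (if f j = t then 1 else 0)) * F t = (\<Sum>j\<in>J. if f j = t then om j * F t else 0)" for t
    by (auto simp: sum_distrib_right intro!: sum.cong)
  have "(\<Sum>t\<in>T. (\<Sum>j\<in>J. om j * (if f j = t then 1 else 0)) * F t)
      = (\<Sum>j\<in>J. \<Sum>t\<in>T. if f j = t then om j * F t else 0)"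
    unfolding e by (rule sum.swap)
  also have "\<dots> = (\<Sum>j\<in>J. om j * F (f j))"
    using assms by (intro sum.cong refl) (simp add: sum.delta)
  finally show ?thesis .
qed

lemma pos_tr: assumes "t \<in> rankings C" "x \<in> C" "y \<in> C" "v \<in> C" shows "pos (map (tr x y) t) v = pos t (tr x y v)"
proof -
  have "\<forall>z\<in>C. tr x y z \<in> C \<and> tr x y (tr x y z) = z" using tr_ok[OF assms(2,3)] .
  then show ?thesis using pos_map[OF assms(1) _ assms(4)] by blast
qed

lemma tr_1: "tr x y x = y" and tr_2: "tr x y y = x" and tr_3: "v \<noteq> x \<Longrightarrow> v \<noteq> y \<Longrightarrow> tr x y v = v"
  by (auto simp: tr_def)

lemma sum3: "(\<Sum>j\<in>A \<times> (B \<times> D). H j) = (\<Sum>i\<in>A. \<Sum>u\<in>B. \<Sum>l\<in>D. H (i, u, l))"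
  by (simp add: sum.cartesian_product)


locale S11z = S11 +
  fixes z :: "nat \<Rightarrow> real"
  assumes f4: "feas4 C m w N a b z"
begin

definition "Oth = C - {a,b}"
definition "kk = m - 2"
definition "SS = (\<Sum>i\<in>I. (1 - w i) * z i)"
definition "QQ = (\<Sum>i\<in>I. w (i+1) * z i)"
definition "AA = sc a - sc b"
definition "RR = AA - SS"
definition "th = (if RR \<le> 0 then 0 else RR / QQ)"
definition "gap o' = sc b - sc o'"
definition "GG = (\<Sum>o'\<in>Oth. gap o')"
definition "cc o' = SS + gap o' + SS / (real kk - 1)"
definition "SC = (\<Sum>o'\<in>Oth. cc o')"
definition "q o' = cc o' / SC"
definition "hh u l = (if kk = 1 then 1 else if u = l then 0 else 1 / (real kk - 1))"
definition "pp u l = q l * hh u l"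
definition "JJ = I \<times> (Oth \<times> Oth)"

definition "t0 j = (SOME t. t \<in> rankings C \<and> pos t b = fst j \<and> pos t a = fst j + 1
    \<and> (2 \<le> fst j \<longrightarrow> pos t (fst (snd j)) = 1)
    \<and> (fst j + 2 \<le> m \<and> (2 \<le> fst j \<longrightarrow> fst (snd j) \<noteq> snd (snd j)) \<longrightarrow> pos t (snd (snd j)) = m))"
definition "s0 j = (if fst j = 1 then t0 j else map (tr b (fst (snd j))) (t0 j))"
definition "s1 j = (if fst j + 1 = m then s0 j else map (tr a (snd (snd j))) (s0 j))"
definition "om j = z (fst j) * pp (fst (snd j)) (snd (snd j))"
definition "xx t = (\<Sum>j\<in>JJ. om j * (if t0 j = t then 1 else 0))"
definition "yy t = (\<Sum>j\<in>JJ. ((1 - th) * om j) * (if s0 j = t then 1 else 0))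
                 + (\<Sum>j\<in>JJ. (th * om j) * (if s1 j = t then 1 else 0))"

lemma finO: "finite Oth" unfolding Oth_def using fin by simp
lemma finJ: "finite JJ" unfolding JJ_def using finO by simp
lemma cardO: "card Oth = kk"
proof -
  have "card Oth = card C - card {a,b}" unfolding Oth_def
    by (rule card_Diff_subset) (use aC bC in auto)
  then show ?thesis using cm ba unfolding kk_def by auto
qed
lemma kk1: "kk \<ge> 1" unfolding kk_def using m3 by simp
lemma OthC: "o' \<in> Oth \<Longrightarrow> o' \<in> C \<and> o' \<noteq> a \<and> o' \<noteq> b" unfolding Oth_def by auto

lemma t0_prop:
  assumes j: "j \<in> JJ"
  shows "t0 j \<in> rankings C \<and> pos (t0 j) b = fst j \<and> pos (t0 j) a = fst j + 1
    \<and> (2 \<le> fst j \<longrightarrow> pos (t0 j) (fst (snd j)) = 1)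
    \<and> (fst j + 2 \<le> m \<and> (2 \<le> fst j \<longrightarrow> fst (snd j) \<noteq> snd (snd j)) \<longrightarrow> pos (t0 j) (snd (snd j)) = m)"
proof -
  have "fst j \<in> I" "fst (snd j) \<in> C - {a,b}" "snd (snd j) \<in> C - {a,b}"
    using j unfolding JJ_def Oth_def by auto
  then have "\<exists>t\<in>rankings C. pos t b = fst j \<and> pos t a = fst j + 1 \<and> (2 \<le> fst j \<longrightarrow> pos t (fst (snd j)) = 1)
           \<and> (fst j + 2 \<le> m \<and> (2 \<le> fst j \<longrightarrow> fst (snd j) \<noteq> snd (snd j)) \<longrightarrow> pos t (snd (snd j)) = m)"
    using exists_t0[OF fin cm aC bC ba[symmetric]] m3 by auto
  then show ?thesis unfolding t0_def by (rule someI2_bex) blast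
qed

lemma t0_Tba: "j \<in> JJ \<Longrightarrow> t0 j \<in> Tba C m a b"
  using t0_prop[of j] unfolding Tba_def JJ_def by auto

lemma jparts: "j \<in> JJ \<Longrightarrow> fst j \<in> I \<and> fst (snd j) \<in> Oth \<and> snd (snd j) \<in> Oth"
  unfolding JJ_def by auto

lemma s0_rank: "j \<in> JJ \<Longrightarrow> s0 j \<in> rankings C"
  using t0_prop[of j] map_rank[OF _ tr_ok[OF bC, of "fst (snd j)"]] jparts[of j] OthC
  unfolding s0_def by auto

lemma sig_s0: "j \<in> JJ \<Longrightarrow> x \<in> C \<Longrightarrow>
   sigma w (s0 j) x = (if fst j = 1 then sigma w (t0 j) x else sigma w (t0 j) (tr b (fst (snd j)) x))"
  using t0_prop[of j] pos_map[OF _ tr_ok[OF bC, of "fst (snd j)"]] jparts[of j] OthC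
  unfolding s0_def sigma_def by auto

lemma s1_rank: "j \<in> JJ \<Longrightarrow> s1 j \<in> rankings C"
  using s0_rank[of j] map_rank[OF _ tr_ok[OF aC, of "snd (snd j)"]] jparts[of j] OthC
  unfolding s1_def by auto

lemma sig_s1: "j \<in> JJ \<Longrightarrow> x \<in> C \<Longrightarrow>
   sigma w (s1 j) x = (if fst j + 1 = m then sigma w (s0 j) x else sigma w (s0 j) (tr a (snd (snd j)) x))"
  using s0_rank[of j] pos_map[OF _ tr_ok[OF aC, of "snd (snd j)"]] jparts[of j] OthC
  unfolding s1_def sigma_def by auto

lemma s0_Tb: "j \<in> JJ \<Longrightarrow> s0 j \<in> Tb C b"
proof -
  assume j: "j \<in> JJ"
  have "pos (s0 j) b = 1"
  proof (cases "fst j = 1")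
    case True then show ?thesis using t0_prop[OF j] unfolding s0_def by simp
  next
    case False
    then have "2 \<le> fst j" using jparts[OF j] by auto
    then show ?thesis using False t0_prop[OF j] pos_tr[OF _ bC, of "t0 j" "fst (snd j)" b] jparts[OF j] OthC bC
      unfolding s0_def by (auto simp: tr_1)
  qed
  then show ?thesis using s0_rank[OF j] unfolding Tb_def by auto
qed

lemma s1_Tb: "j \<in> JJ \<Longrightarrow> s1 j \<in> Tb C b"
proof -
  assume j: "j \<in> JJ"
  have "snd (snd j) \<noteq> b" using OthC jparts[OF j] by blast
  then have tb: "tr a (snd (snd j)) b = b" using tr_3[of b a "snd (snd j)"] ba by auto
  have "snd (snd j) \<in> C" using OthC jparts[OF j] by blast
  then have "pos (s1 j) b = pos (s0 j) b"
    using s0_rank[OF j] pos_tr[OF _ aC, of "s0 j" "snd (snd j)" b] bC tb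
    unfolding s1_def by auto
  then show ?thesis using s0_Tb[OF j] s1_rank[OF j] unfolding Tb_def by auto
qed

end


context S11z
begin

lemma zpos: "i \<in> I \<Longrightarrow> z i \<ge> 0" using f4 unfolding feas4_def by auto

lemma wI: "i \<in> I \<Longrightarrow> 0 \<le> w i \<and> w i \<le> 1 \<and> 0 \<le> w (i+1) \<and> w (i+1) \<le> 1"
  using w01[of i] w01[of "i+1"] m3 by auto

lemma SS_nn: "SS \<ge> 0" unfolding SS_def using zpos wI by (auto intro!: sum_nonneg)
lemma QQ_nn: "QQ \<ge> 0" unfolding QQ_def using zpos wI by (auto intro!: sum_nonneg)

lemma C1: "SS + QQ \<ge> AA"
proof -
  have "(\<Sum>i=1..m-1. (1 - w i + w (i+1)) * z i) = SS + QQ"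
    unfolding SS_def QQ_def by (simp add: sum.distrib[symmetric] algebra_simps)
  then show ?thesis using f4 unfolding feas4_def AA_def by simp
qed

lemma C2: "SS \<ge> n * wbar w m - sc b"
  using f4 unfolding feas4_def SS_def by simp

lemma AA_pos: "AA > 0" using awin[OF bC ba] unfolding AA_def by simp

lemma gap_nn: "o' \<in> Oth \<Longrightarrow> gap o' \<ge> 0" unfolding gap_def using bsec OthC by auto
lemma GG_nn: "GG \<ge> 0" unfolding GG_def using gap_nn by (auto intro!: sum_nonneg)

lemma key: "real m * (n * wbar w m - sc b) = AA - GG"
proof -
  have m0: "real m > 0" using m3 by simp
  have Ceq: "C = insert a (insert b Oth)" unfolding Oth_def using aC bC by auto
  have "(\<Sum>x\<in>C. sc x) = (\<Sum>x\<in>insert a (insert b Oth). sc x)"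
    by (rule arg_cong[where f="\<lambda>S. \<Sum>x\<in>S. sc x"], rule Ceq)
  also have "\<dots> = sc a + (sc b + (\<Sum>x\<in>Oth. sc x))"
    using finO ba by (simp add: Oth_def)
  finally have "(\<Sum>x\<in>C. sc x) = sc a + (sc b + (\<Sum>x\<in>Oth. sc x))" .
  moreover have "GG = real kk * sc b - (\<Sum>x\<in>Oth. sc x)"
    unfolding GG_def gap_def by (simp add: sum_subtractf cardO)
  moreover have "real m = real kk + 2" unfolding kk_def using m3 by simp
  moreover have "real m * (n * wbar w m) = n * WW" unfolding wbar_eq using m0 by simp
  ultimately show ?thesis using scsum unfolding AA_def by (simp add: algebra_simps)
qed

lemma RR_le: "RR \<le> (real m - 1) * SS + GG"
proof -
  have "real m * (n * wbar w m - sc b) \<le> real m * SS" using C2 m3 by (intro mult_left_mono) auto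
  then have "AA - GG \<le> real m * SS" using key by simp
  then show ?thesis unfolding RR_def by (simp add: algebra_simps)
qed

lemma th_facts: "0 \<le> th \<and> th \<le> 1 \<and> (RR \<le> 0 \<longrightarrow> th = 0) \<and> (RR > 0 \<longrightarrow> th * QQ = RR)"
proof (cases "RR \<le> 0")
  case True then show ?thesis unfolding th_def by simp
next
  case False
  then have "QQ \<ge> RR" "RR > 0" using C1 unfolding RR_def by auto
  then show ?thesis unfolding th_def using False by (auto simp: field_simps)
qed

lemma SSGG_pos: "SS + GG > 0"
proof (rule ccontr)
  assume "\<not> SS + GG > 0"
  then have "SS = 0" "GG = 0" using SS_nn GG_nn by auto
  then show False using RR_le AA_pos unfolding RR_def by simp
qed

lemma cc_nn: "o' \<in> Oth \<Longrightarrow> cc o' \<ge> 0"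
  unfolding cc_def using SS_nn gap_nn[of o'] kk1 by (auto intro!: add_nonneg_nonneg divide_nonneg_nonneg)

lemma SC_eq: "SC = real kk * SS + GG + real kk * (SS / (real kk - 1))"
  unfolding SC_def cc_def GG_def by (simp add: sum.distrib cardO algebra_simps)

lemma SC_ge: "SC \<ge> SS + GG"
proof -
  have "real kk * SS \<ge> SS" using kk1 SS_nn by (simp add: mult_le_cancel_right1)
  moreover have "real kk * (SS / (real kk - 1)) \<ge> 0" using kk1 SS_nn by (auto intro!: mult_nonneg_nonneg divide_nonneg_nonneg)
  ultimately show ?thesis unfolding SC_eq by simp
qed

lemma SC_pos: "SC > 0" using SC_ge SSGG_pos by simp

lemma q_nn: "o' \<in> Oth \<Longrightarrow> q o' \<ge> 0" unfolding q_def using cc_nn SC_pos by simp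
lemma q_sum: "(\<Sum>o'\<in>Oth. q o') = 1" unfolding q_def using SC_pos by (simp add: sum_divide_distrib[symmetric] SC_def)
lemma q_le1: "o' \<in> Oth \<Longrightarrow> q o' \<le> 1"
  using member_le_sum[of o' Oth q] q_nn q_sum finO by auto

lemma hh_nn: "hh u l \<ge> 0" unfolding hh_def using kk1 by auto
lemma pp_nn: "u \<in> Oth \<Longrightarrow> l \<in> Oth \<Longrightarrow> pp u l \<ge> 0" unfolding pp_def by (intro mult_nonneg_nonneg q_nn hh_nn)

lemma sum_except: "o' \<in> Oth \<Longrightarrow> (\<Sum>u\<in>Oth. if u = o' then 0 else (f :: _ \<Rightarrow> real) u) = (\<Sum>u\<in>Oth. f u) - f o'"
proof -
  assume o: "o' \<in> Oth"
  have "(\<Sum>u\<in>Oth. if u = o' then 0 else f u) = (\<Sum>u\<in>Oth. f u - (if u = o' then f u else 0))"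
    by (rule sum.cong) auto
  also have "\<dots> = (\<Sum>u\<in>Oth. f u) - f o'" using o finO by (simp add: sum_subtractf sum.delta')
  finally show ?thesis .
qed

lemma hh_sum: "o' \<in> Oth \<Longrightarrow> (\<Sum>u\<in>Oth. hh u o') = 1"
proof (cases "kk = 1")
  case True
  assume o: "o' \<in> Oth"
  then show ?thesis unfolding hh_def using True cardO by simp
next
  case False
  assume o: "o' \<in> Oth"
  have k2: "real kk - 1 > 0" using False kk1 by simp
  have "(\<Sum>u\<in>Oth. hh u o') = (\<Sum>u\<in>Oth. if u = o' then 0 else 1 / (real kk - 1))"
    unfolding hh_def using False by simp
  also have "\<dots> = (\<Sum>u\<in>Oth. 1 / (real kk - 1)) - 1 / (real kk - 1)"
    by (rule sum_except[OF o])
  also have "\<dots> = real kk * (1 / (real kk - 1)) - 1 / (real kk - 1)" using cardO by simp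
  also have "\<dots> = 1" using k2 by (simp add: diff_divide_distrib[symmetric])
  finally show ?thesis .
qed

lemma pm_u: "o' \<in> Oth \<Longrightarrow> (\<Sum>u\<in>Oth. pp u o') = q o'"
  unfolding pp_def using hh_sum by (simp add: sum_distrib_left[symmetric])

lemma pm1: "(\<Sum>u\<in>Oth. \<Sum>l\<in>Oth. pp u l) = 1"
  using q_sum pm_u by (simp add: sum.swap[of _ Oth])

lemma pm_l: "o' \<in> Oth \<Longrightarrow> (\<Sum>l\<in>Oth. pp o' l) = (if kk = 1 then 1 else (1 - q o') / (real kk - 1))"
proof (cases "kk = 1")
  case True
  then show ?thesis unfolding pp_def hh_def using q_sum by simp
next
  case False
  assume o: "o' \<in> Oth"
  have "(\<Sum>l\<in>Oth. pp o' l) = (\<Sum>l\<in>Oth. if l = o' then 0 else q l / (real kk - 1))"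
    unfolding pp_def hh_def using False by (intro sum.cong) auto
  also have "\<dots> = (\<Sum>l\<in>Oth. q l / (real kk - 1)) - q o' / (real kk - 1)"
    by (rule sum_except[OF o])
  also have "\<dots> = (1 - q o') / (real kk - 1)"
    using q_sum by (simp add: sum_divide_distrib[symmetric] diff_divide_distrib)
  finally show ?thesis using False by simp
qed

lemma om_nn: "j \<in> JJ \<Longrightarrow> om j \<ge> 0"
  unfolding om_def using jparts zpos pp_nn by (auto intro!: mult_nonneg_nonneg)

lemma sum_JJ: "(\<Sum>j\<in>JJ. om j * (F (fst j) * H (fst (snd j)) (snd (snd j))))
   = (\<Sum>i\<in>I. z i * F i) * (\<Sum>u\<in>Oth. \<Sum>l\<in>Oth. pp u l * H u l)"
proof -
  have "(\<Sum>j\<in>JJ. om j * (F (fst j) * H (fst (snd j)) (snd (snd j))))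
     = (\<Sum>i\<in>I. \<Sum>u\<in>Oth. \<Sum>l\<in>Oth. z i * pp u l * (F i * H u l))"
    unfolding JJ_def sum3 om_def by simp
  also have "\<dots> = (\<Sum>i\<in>I. (z i * F i) * (\<Sum>u\<in>Oth. \<Sum>l\<in>Oth. pp u l * H u l))"
    by (rule sum.cong[OF refl]) (simp add: sum_distrib_left mult_ac)
  also have "\<dots> = (\<Sum>i\<in>I. z i * F i) * (\<Sum>u\<in>Oth. \<Sum>l\<in>Oth. pp u l * H u l)"
    by (simp add: sum_distrib_right)
  finally show ?thesis .
qed

end


context S11z
begin

definition "cf j x = sigma w (t0 j) x - (1 - th) * sigma w (s0 j) x - th * sigma w (s1 j) x"

lemma sig_t0: "j \<in> JJ \<Longrightarrow> sigma w (t0 j) b = w (fst j) \<and> sigma w (t0 j) a = w (fst j + 1)"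
  using t0_prop[of j] unfolding sigma_def by simp

lemma sig_s0_a: assumes j: "j \<in> JJ" shows "sigma w (s0 j) a = w (fst j + 1)"
proof -
  have u: "fst (snd j) \<in> Oth" using jparts[OF j] by blast
  have "tr b (fst (snd j)) a = a" using OthC[OF u] ba by (intro tr_3) auto
  then show ?thesis using sig_s0[OF j aC] sig_t0[OF j] by simp
qed

lemma cf_a: assumes j: "j \<in> JJ" and v: "2 \<le> fst j \<longrightarrow> fst j + 2 \<le> m \<longrightarrow> fst (snd j) \<noteq> snd (snd j)"
  shows "cf j a = th * w (fst j + 1)"
proof (cases "fst j + 1 = m")
  case True
  then have "sigma w (s1 j) a = sigma w (s0 j) a" using sig_s1[OF j aC] by simp
  then show ?thesis unfolding cf_def using sig_s0_a[OF j] sig_t0[OF j] True wm by (simp add: algebra_simps)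
next
  case False
  have i: "fst j \<in> I" and u: "fst (snd j) \<in> Oth" and l: "snd (snd j) \<in> Oth" using jparts[OF j] by auto
  have i2: "fst j + 2 \<le> m" using False i by auto
  have "tr a (snd (snd j)) a = snd (snd j)" by (rule tr_1)
  then have "sigma w (s1 j) a = sigma w (s0 j) (snd (snd j))" using sig_s1[OF j aC] False by simp
  also have "\<dots> = sigma w (t0 j) (snd (snd j))"
  proof (cases "fst j = 1")
    case True then show ?thesis using sig_s0[OF j, of "snd (snd j)"] OthC[OF l] by simp
  next
    case False
    then have "2 \<le> fst j" using i by auto
    then have "snd (snd j) \<noteq> fst (snd j)" using v i2 by auto
    then have "tr b (fst (snd j)) (snd (snd j)) = snd (snd j)" using OthC[OF l] by (intro tr_3) auto
    then show ?thesis using sig_s0[OF j, of "snd (snd j)"] OthC[OF l] False by simp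
  qed
  also have "\<dots> = 0"
  proof -
    have "pos (t0 j) (snd (snd j)) = m" using t0_prop[OF j] i2 v by auto
    then show ?thesis unfolding sigma_def using wm by simp
  qed
  finally show ?thesis unfolding cf_def using sig_s0_a[OF j] sig_t0[OF j] by (simp add: algebra_simps)
qed

lemma d_o: assumes j: "j \<in> JJ" and o: "o' \<in> Oth"
  shows "sigma w (t0 j) o' - sigma w (s0 j) o' = (if o' = fst (snd j) then 1 - w (fst j) else 0)"
proof (cases "fst j = 1")
  case True then show ?thesis using sig_s0[OF j, of o'] OthC[OF o] w1 by simp
next
  case False
  have i: "fst j \<in> I" and u: "fst (snd j) \<in> Oth" using jparts[OF j] by auto
  then have i2: "2 \<le> fst j" using False by auto
  show ?thesis
  proof (cases "o' = fst (snd j)")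
    case True
    have "tr b (fst (snd j)) o' = b" using True by (simp add: tr_2)
    then have "sigma w (s0 j) o' = w (fst j)" using sig_s0[OF j, of o'] OthC[OF o] False sig_t0[OF j] by simp
    moreover have "sigma w (t0 j) o' = 1" using t0_prop[OF j] i2 True w1 unfolding sigma_def by simp
    ultimately show ?thesis using True by simp
  next
    case F2: False
    have "tr b (fst (snd j)) o' = o'" using F2 OthC[OF o] by (intro tr_3) auto
    then show ?thesis using sig_s0[OF j, of o'] OthC[OF o] False F2 by simp
  qed
qed

lemma cf_o: assumes j: "j \<in> JJ" and o: "o' \<in> Oth"
  shows "cf j o' \<ge> (if o' = fst (snd j) then 1 - w (fst j) else 0) - th * (if o' = snd (snd j) then w (fst j + 1) else 0)"
proof (cases "fst j + 1 = m")
  case True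
  then have "sigma w (s1 j) o' = sigma w (s0 j) o'" using sig_s1[OF j] OthC[OF o] by simp
  then have "cf j o' = sigma w (t0 j) o' - sigma w (s0 j) o'" unfolding cf_def by (simp add: algebra_simps)
  then show ?thesis using d_o[OF j o] True wm by simp
next
  case False
  have th: "0 \<le> th" using th_facts by simp
  show ?thesis
  proof (cases "o' = snd (snd j)")
    case True
    have "tr a (snd (snd j)) o' = a" using True by (simp add: tr_2)
    then have s1: "sigma w (s1 j) o' = w (fst j + 1)" using sig_s1[OF j] OthC[OF o] False sig_s0_a[OF j] by simp
    have "sigma w (s0 j) o' \<ge> 0" using sig01[OF s0_rank[OF j]] OthC[OF o] by blast
    then have "th * sigma w (s0 j) o' \<ge> 0" using th by simp
    then have "cf j o' \<ge> (sigma w (t0 j) o' - sigma w (s0 j) o') - th * w (fst j + 1)"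
      unfolding cf_def s1 by (simp add: algebra_simps)
    then show ?thesis using d_o[OF j o] True by simp
  next
    case F2: False
    have "tr a (snd (snd j)) o' = o'" using F2 OthC[OF o] by (intro tr_3) auto
    then have "sigma w (s1 j) o' = sigma w (s0 j) o'" using sig_s1[OF j] OthC[OF o] False by simp
    then have "cf j o' = sigma w (t0 j) o' - sigma w (s0 j) o'" unfolding cf_def by (simp add: algebra_simps)
    then show ?thesis using d_o[OF j o] F2 by simp
  qed
qed

end


context S11z
begin

lemma sum_x: "(\<Sum>t\<in>Tba C m a b. xx t * F t) = (\<Sum>j\<in>JJ. om j * F (t0 j))"
  unfolding xx_def by (rule transfer_sum[OF finTba finJ t0_Tba])

lemma sum_y: "(\<Sum>t\<in>Tb C b. yy t * F t) = (\<Sum>j\<in>JJ. ((1 - th) * om j) * F (s0 j)) + (\<Sum>j\<in>JJ. (th * om j) * F (s1 j))"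
proof -
  have "(\<Sum>t\<in>Tb C b. yy t * F t) =
     (\<Sum>t\<in>Tb C b. (\<Sum>j\<in>JJ. ((1 - th) * om j) * (if s0 j = t then 1 else 0)) * F t)
   + (\<Sum>t\<in>Tb C b. (\<Sum>j\<in>JJ. (th * om j) * (if s1 j = t then 1 else 0)) * F t)"
    unfolding yy_def by (simp add: distrib_right sum.distrib)
  also have "\<dots> = (\<Sum>j\<in>JJ. ((1 - th) * om j) * F (s0 j)) + (\<Sum>j\<in>JJ. (th * om j) * F (s1 j))"
    using transfer_sum[OF finTb finJ s0_Tb, where om="\<lambda>j. (1 - th) * om j" and F=F]
      transfer_sum[OF finTb finJ s1_Tb, where om="\<lambda>j. th * om j" and F=F] by simp
  finally show ?thesis .
qed

lemma lhs_eq: assumes x: "x \<in> C"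
  shows "(\<Sum>t\<in>Tb C b. yy t * (1 - sigma w t x)) - (\<Sum>t\<in>Tba C m a b. xx t * (sigma w t b - sigma w t x))
    = (\<Sum>j\<in>JJ. om j * (1 - w (fst j) + cf j x))"
proof -
  have "(\<Sum>t\<in>Tb C b. yy t * (1 - sigma w t x)) - (\<Sum>t\<in>Tba C m a b. xx t * (sigma w t b - sigma w t x))
     = (\<Sum>j\<in>JJ. ((1 - th) * om j) * (1 - sigma w (s0 j) x)) + (\<Sum>j\<in>JJ. (th * om j) * (1 - sigma w (s1 j) x))
       - (\<Sum>j\<in>JJ. om j * (sigma w (t0 j) b - sigma w (t0 j) x))"
    by (simp only: sum_x sum_y)
  also have "\<dots> = (\<Sum>j\<in>JJ. ((1 - th) * om j) * (1 - sigma w (s0 j) x) + (th * om j) * (1 - sigma w (s1 j) x)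
       - om j * (sigma w (t0 j) b - sigma w (t0 j) x))"
    by (simp add: sum.distrib sum_subtractf)
  also have "\<dots> = (\<Sum>j\<in>JJ. om j * (1 - w (fst j) + cf j x))"
    by (rule sum.cong[OF refl]) (simp add: cf_def sig_t0 algebra_simps)
  finally show ?thesis .
qed

lemma om_zero: assumes j: "j \<in> JJ" and "2 \<le> fst j" "fst j + 2 \<le> m" "fst (snd j) = snd (snd j)"
  shows "om j = 0"
proof -
  have "kk \<noteq> 1" using assms unfolding kk_def by auto
  then show ?thesis unfolding om_def pp_def hh_def using assms by simp
qed

lemma final_o: assumes o: "o' \<in> Oth"
  shows "SS + SS * (if kk = 1 then 1 else (1 - q o') / (real kk - 1)) - th * QQ * q o' \<ge> - gap o'"
proof (cases "RR \<le> 0")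
  case True
  then have "th = 0" using th_facts by simp
  then have t0: "th * QQ * q o' = 0" by simp
  have "(if kk = 1 then 1 else (1 - q o') / (real kk - 1)) \<ge> 0"
    using q_le1[OF o] kk1 by auto
  then have "SS * (if kk = 1 then 1 else (1 - q o') / (real kk - 1)) \<ge> 0"
    using SS_nn by (rule mult_nonneg_nonneg[rotated])
  then show ?thesis using SS_nn gap_nn[OF o] t0 by linarith
next
  case False
  then have thq: "th * QQ = RR" using th_facts by simp
  show ?thesis
  proof (cases "kk = 1")
    case True
    then have "card Oth = 1" using cardO by simp
    then obtain o1 where "Oth = {o1}" using card_1_singletonE by blast
    then have O1: "Oth = {o'}" using o by simp
    then have "q o' = 1" using q_sum by simp
    moreover have "GG = gap o'" unfolding GG_def O1 by simp
    moreover have "real m = 3" using True unfolding kk_def using m3 by simp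
    ultimately show ?thesis using RR_le thq True by simp
  next
    case False
    define K where "K = real kk - 1"
    have K: "K > 0" using False kk1 unfolding K_def by simp
    have KK: "K * (SS / K) = SS" using K by simp
    have SCe: "SC = real kk * SS + GG + real kk * (SS / K)" using SC_eq unfolding K_def by simp
    have RRl: "RR \<le> (real kk + 1) * SS + GG" using RR_le m3 unfolding kk_def by (simp add: of_nat_diff)
    have kkK: "real kk = K + 1" unfolding K_def by simp
    have "real kk * (SS / K) = K * (SS / K) + SS / K" unfolding kkK by (simp only: distrib_right mult_1_left)
    then have e: "real kk * (SS / K) = SS + SS / K" using KK by simp
    have "SC \<ge> SS / K + RR" using SCe RRl e by (simp add: algebra_simps)
    then have "cc o' * (SS / K + RR) \<le> cc o' * SC" using cc_nn[OF o] by (intro mult_left_mono) auto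
    then have qb: "q o' * (SS / K + RR) \<le> cc o'" unfolding q_def using SC_pos
      by (simp add: divide_simps mult.commute)
    have "SS + SS * ((1 - q o') / K) - RR * q o' = cc o' - q o' * (SS / K + RR) - gap o'"
      unfolding cc_def K_def by (simp add: algebra_simps diff_divide_distrib)
    then show ?thesis using qb thq False unfolding K_def by (simp add: algebra_simps)
  qed
qed

end


context S11z
begin

lemma om_sum: "(\<Sum>j\<in>JJ. om j) = (\<Sum>i\<in>I. z i)"
  using sum_JJ[where F="\<lambda>_. 1" and H="\<lambda>_ _. 1"] pm1 by simp

lemma xx_nn: "xx t \<ge> 0" unfolding xx_def using om_nn by (auto intro!: sum_nonneg)
lemma yy_nn: "yy t \<ge> 0"
  unfolding yy_def using om_nn th_facts by (auto intro!: sum_nonneg add_nonneg_nonneg mult_nonneg_nonneg)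

lemma p4_to_p2: "feas2 C m w N a b xx yy \<and> (\<Sum>t\<in>Tba C m a b. xx t) = (\<Sum>i=1..m-1. z i)"
proof -
  have tx: "(\<Sum>t\<in>Tba C m a b. xx t) = (\<Sum>i\<in>I. z i)"
    using sum_x[where F="\<lambda>_. 1"] om_sum by simp
  have ty: "(\<Sum>t\<in>Tb C b. yy t) = (\<Sum>i\<in>I. z i)"
  proof -
    have "(\<Sum>t\<in>Tb C b. yy t) = (\<Sum>j\<in>JJ. (1 - th) * om j) + (\<Sum>j\<in>JJ. th * om j)"
      using sum_y[where F="\<lambda>_. 1"] by simp
    also have "\<dots> = (\<Sum>j\<in>JJ. om j)" by (simp add: sum.distrib[symmetric] algebra_simps)
    finally show ?thesis using om_sum by simp
  qed
  have ca: "(\<Sum>t\<in>Tb C b. yy t * (1 - sigma w t a)) - (\<Sum>t\<in>Tba C m a b. xx t * (sigma w t b - sigma w t a))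
        \<ge> sc a - sc b"
  proof -
    have "(\<Sum>j\<in>JJ. om j * (1 - w (fst j) + cf j a)) = (\<Sum>j\<in>JJ. om j * ((1 - w (fst j) + th * w (fst j + 1)) * 1))"
    proof (rule sum.cong[OF refl])
      fix j assume j: "j \<in> JJ"
      show "om j * (1 - w (fst j) + cf j a) = om j * ((1 - w (fst j) + th * w (fst j + 1)) * 1)"
      proof (cases "2 \<le> fst j \<and> fst j + 2 \<le> m \<and> fst (snd j) = snd (snd j)")
        case True then show ?thesis using om_zero[OF j] by simp
      next
        case False then show ?thesis using cf_a[OF j] by auto
      qed
    qed
    also have "\<dots> = (\<Sum>i\<in>I. z i * (1 - w i + th * w (i + 1))) * 1"
      using sum_JJ[where F="\<lambda>i. 1 - w i + th * w (i + 1)" and H="\<lambda>_ _. 1"] pm1 by simp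
    also have "\<dots> = SS + th * QQ"
    proof -
      have "(\<Sum>i\<in>I. z i * (1 - w i + th * w (i + 1))) = (\<Sum>i\<in>I. (1 - w i) * z i + th * (w (i+1) * z i))"
        by (rule sum.cong) (auto simp: algebra_simps)
      also have "\<dots> = SS + th * QQ" unfolding SS_def QQ_def by (simp add: sum.distrib sum_distrib_left)
      finally show ?thesis by simp
    qed
    also have "\<dots> \<ge> AA" using th_facts unfolding RR_def by (cases "RR \<le> 0") (auto simp: RR_def)
    finally show ?thesis using lhs_eq[OF aC] unfolding AA_def by simp
  qed
  have co: "(\<Sum>t\<in>Tb C b. yy t * (1 - sigma w t o')) - (\<Sum>t\<in>Tba C m a b. xx t * (sigma w t b - sigma w t o'))
        \<ge> sc o' - sc b" if o: "o' \<in> Oth" for o'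
  proof -
    have "(\<Sum>j\<in>JJ. om j * (1 - w (fst j) + cf j o')) \<ge>
       (\<Sum>j\<in>JJ. om j * ((1 - w (fst j)) * 1) + om j * ((1 - w (fst j)) * (if o' = fst (snd j) then 1 else 0))
            - th * (om j * (w (fst j + 1) * (if o' = snd (snd j) then 1 else 0))))"
    proof (rule sum_mono)
      fix j assume j: "j \<in> JJ"
      have "om j * (1 - w (fst j) + cf j o') \<ge> om j * (1 - w (fst j) + ((if o' = fst (snd j) then 1 - w (fst j) else 0) - th * (if o' = snd (snd j) then w (fst j + 1) else 0)))"
        using cf_o[OF j o] om_nn[OF j] by (intro mult_left_mono) auto
      then show "om j * ((1 - w (fst j)) * 1) + om j * ((1 - w (fst j)) * (if o' = fst (snd j) then 1 else 0))
            - th * (om j * (w (fst j + 1) * (if o' = snd (snd j) then 1 else 0))) \<le> om j * (1 - w (fst j) + cf j o')"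
        by (auto simp: algebra_simps)
    qed
    also have "(\<Sum>j\<in>JJ. om j * ((1 - w (fst j)) * 1) + om j * ((1 - w (fst j)) * (if o' = fst (snd j) then 1 else 0))
            - th * (om j * (w (fst j + 1) * (if o' = snd (snd j) then 1 else 0))))
       = (\<Sum>j\<in>JJ. om j * ((1 - w (fst j)) * 1)) + (\<Sum>j\<in>JJ. om j * ((1 - w (fst j)) * (if o' = fst (snd j) then 1 else 0)))
            - th * (\<Sum>j\<in>JJ. om j * (w (fst j + 1) * (if o' = snd (snd j) then 1 else 0)))"
      by (simp add: sum.distrib sum_subtractf sum_distrib_left)
    also have "\<dots> = SS * 1 + SS * (\<Sum>u\<in>Oth. \<Sum>l\<in>Oth. pp u l * (if o' = u then 1 else 0))
            - th * (QQ * (\<Sum>u\<in>Oth. \<Sum>l\<in>Oth. pp u l * (if o' = l then 1 else 0)))"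
      using sum_JJ[where F="\<lambda>i. 1 - w i" and H="\<lambda>_ _. 1"]
        sum_JJ[where F="\<lambda>i. 1 - w i" and H="\<lambda>u _. if o' = u then 1 else 0"]
        sum_JJ[where F="\<lambda>i. w (i + 1)" and H="\<lambda>_ l. if o' = l then 1 else 0"] pm1
      unfolding SS_def QQ_def by (simp add: mult.commute)
    also have "(\<Sum>u\<in>Oth. \<Sum>l\<in>Oth. pp u l * (if o' = u then 1 else 0)) = (\<Sum>l\<in>Oth. pp o' l)"
    proof -
      have "\<And>u. (\<Sum>l\<in>Oth. pp u l * (if o' = u then 1 else 0)) = (if o' = u then (\<Sum>l\<in>Oth. pp u l) else 0)"
        by auto
      then have "(\<Sum>u\<in>Oth. \<Sum>l\<in>Oth. pp u l * (if o' = u then 1 else 0)) = (\<Sum>u\<in>Oth. if o' = u then (\<Sum>l\<in>Oth. pp u l) else 0)"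
        by simp
      also have "\<dots> = (\<Sum>l\<in>Oth. pp o' l)" using o finO by (simp add: sum.delta)
      finally show ?thesis .
    qed
    also have "(\<Sum>u\<in>Oth. \<Sum>l\<in>Oth. pp u l * (if o' = l then 1 else 0)) = q o'"
    proof -
      have "\<And>u. (\<Sum>l\<in>Oth. pp u l * (if o' = l then 1 else 0)) = (\<Sum>l\<in>Oth. if o' = l then pp u l else 0)"
        by (rule sum.cong) auto
      also have "\<And>u. (\<Sum>l\<in>Oth. if o' = l then pp u l else 0) = pp u o'" using o finO by (simp add: sum.delta)
      finally show ?thesis using pm_u[OF o] by simp
    qed
    finally have "(\<Sum>j\<in>JJ. om j * (1 - w (fst j) + cf j o')) \<ge> SS + SS * (\<Sum>l\<in>Oth. pp o' l) - th * QQ * q o'"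
      by (simp add: mult.assoc)
    then have "(\<Sum>j\<in>JJ. om j * (1 - w (fst j) + cf j o')) \<ge> - gap o'"
      using final_o[OF o] pm_l[OF o] by simp
    then show ?thesis using lhs_eq[of o'] OthC[OF o] unfolding gap_def by simp
  qed
  have "\<forall>\<alpha>\<in>C. \<alpha> \<noteq> b \<longrightarrow>
        (\<Sum>t\<in>Tb C b. yy t * (1 - sigma w t \<alpha>)) - (\<Sum>t\<in>Tba C m a b. xx t * (sigma w t b - sigma w t \<alpha>))
        \<ge> sc \<alpha> - sc b"
  proof (intro ballI impI)
    fix \<alpha> assume "\<alpha> \<in> C" "\<alpha> \<noteq> b"
    then have "\<alpha> = a \<or> \<alpha> \<in> Oth" unfolding Oth_def by auto
    then show "(\<Sum>t\<in>Tb C b. yy t * (1 - sigma w t \<alpha>)) - (\<Sum>t\<in>Tba C m a b. xx t * (sigma w t b - sigma w t \<alpha>))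
        \<ge> sc \<alpha> - sc b" using ca co by auto
  qed
  then show ?thesis unfolding feas2_def using tx ty xx_nn yy_nn by auto
qed

end


context S11
begin

definition "BB = n * wbar w m - sc b"
definition "AA0 = sc a - sc b"
definition "PP i = (1 - w i + w (i+1), 1 - w i)"

lemma AA0_pos: "AA0 > 0" using awin[OF bC ba] unfolding AA0_def by simp

lemma obj5_eq: "obj5 C m w N a b l u = AA0 * l + BB * (u - l)"
  unfolding obj5_def AA0_def BB_def by (simp add: algebra_simps)

lemma feas4_iff: "feas4 C m w N a b z \<longleftrightarrow>
   (\<Sum>i\<in>I. fst (PP i) * z i) \<ge> AA0 \<and> (\<Sum>i\<in>I. snd (PP i) * z i) \<ge> BB \<and> (\<forall>i\<in>I. z i \<ge> 0)"
  unfolding feas4_def PP_def AA0_def BB_def by simp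

lemma feas5_iff: "feas5 m w l u \<longleftrightarrow>
   (\<forall>i\<in>I. fst (PP i) * l + snd (PP i) * (u - l) \<le> 1) \<and> 0 \<le> l \<and> l \<le> u"
  unfolding feas5_def PP_def by (simp add: algebra_simps)

lemma weak: assumes "feas4 C m w N a b z" "feas5 m w l u"
  shows "obj5 C m w N a b l u \<le> (\<Sum>i\<in>I. z i)"
proof -
  have z: "\<forall>i\<in>I. z i \<ge> 0" and c1: "(\<Sum>i\<in>I. fst (PP i) * z i) \<ge> AA0" and c2: "(\<Sum>i\<in>I. snd (PP i) * z i) \<ge> BB"
    using assms(1) unfolding feas4_iff by auto
  have d: "\<forall>i\<in>I. fst (PP i) * l + snd (PP i) * (u - l) \<le> 1" and l: "0 \<le> l" "l \<le> u"
    using assms(2) unfolding feas5_iff by auto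
  have "(\<Sum>i\<in>I. z i) \<ge> (\<Sum>i\<in>I. z i * (fst (PP i) * l + snd (PP i) * (u - l)))"
    by (rule sum_mono) (use z d in \<open>auto intro: mult_left_le\<close>)
  also have "(\<Sum>i\<in>I. z i * (fst (PP i) * l + snd (PP i) * (u - l)))
     = l * (\<Sum>i\<in>I. fst (PP i) * z i) + (u - l) * (\<Sum>i\<in>I. snd (PP i) * z i)"
    by (simp add: sum_distrib_left sum.distrib[symmetric] algebra_simps)
  finally have e: "(\<Sum>i\<in>I. z i) \<ge> l * (\<Sum>i\<in>I. fst (PP i) * z i) + (u - l) * (\<Sum>i\<in>I. snd (PP i) * z i)" .
  have "l * (\<Sum>i\<in>I. fst (PP i) * z i) \<ge> l * AA0" using c1 l by (intro mult_left_mono) auto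
  moreover have "(u - l) * (\<Sum>i\<in>I. snd (PP i) * z i) \<ge> (u - l) * BB" using c2 l by (intro mult_left_mono) auto
  ultimately show ?thesis using e unfolding obj5_eq by (simp add: algebra_simps)
qed

lemma sum_single: "j \<in> I \<Longrightarrow> (\<Sum>i\<in>I. f i * (if i = j then T else 0)) = f j * (T::real)"
  by (simp add: if_distrib cong: if_cong) 

lemma infeasible_unbounded:
  assumes nf: "\<not> (\<exists>z. feas4 C m w N a b z)"
  shows "\<forall>B. \<exists>l u. feas5 m w l u \<and> obj5 C m w N a b l u > B"
proof -
  have v0: "\<forall>j\<in>I. snd (PP j) \<le> 0"
  proof (rule ccontr)
    assume "\<not> (\<forall>j\<in>I. snd (PP j) \<le> 0)"
    then obtain j where j: "j \<in> I" "snd (PP j) > 0" by auto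
    have w': "0 \<le> w (j+1)" using w01[of "j+1"] j m3 by auto
    define T where "T = max AA0 BB / snd (PP j)"
    define z where "z = (\<lambda>i::nat. if i = j then T else (0::real))"
    have Tp: "T \<ge> 0" unfolding T_def using j AA0_pos by auto
    have e2: "snd (PP j) * T = max AA0 BB" unfolding T_def using j by simp
    have e1: "fst (PP j) * T \<ge> snd (PP j) * T" using Tp w' unfolding PP_def by (intro mult_right_mono) auto
    have "feas4 C m w N a b z" unfolding feas4_iff z_def
      using sum_single[OF j(1), of "\<lambda>i. fst (PP i)" T] sum_single[OF j(1), of "\<lambda>i. snd (PP i)" T] e1 e2 Tp
      by auto
    then show False using nf by blast
  qed
  have Bpos: "BB > 0"
  proof (rule ccontr)
    assume "\<not> BB > 0"
    have one: "1 \<in> I" using m3 by auto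
    have two: "2 \<in> I" using m3 by auto
    have "1 - w 2 \<ge> 0" using w01[of 2] m3 by auto
    moreover have "snd (PP 2) \<le> 0" using v0 two by blast
    ultimately have "w 2 = 1" unfolding PP_def by simp
    then have p1: "fst (PP 1) = 1" "snd (PP 1) = 0" unfolding PP_def using w1 by (auto simp: numeral_2_eq_2)
    define z where "z = (\<lambda>i::nat. if i = 1 then AA0 else (0::real))"
    have "feas4 C m w N a b z" unfolding feas4_iff z_def
      using sum_single[OF one, of "\<lambda>i. fst (PP i)" AA0] sum_single[OF one, of "\<lambda>i. snd (PP i)" AA0] p1
        \<open>\<not> BB > 0\<close> AA0_pos by auto
    then show False using nf by blast
  qed
  show ?thesis
  proof
    fix B :: real
    define T where "T = \<bar>B\<bar> / BB + 1"
    have Tp: "T \<ge> 0" unfolding T_def using Bpos by auto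
    have "BB * T = \<bar>B\<bar> + BB" unfolding T_def using Bpos by (simp add: field_simps)
    then have "obj5 C m w N a b 0 T > B" unfolding obj5_eq using Bpos by simp
    moreover have "feas5 m w 0 T" unfolding feas5_iff using v0 Tp
    proof -
      have "\<forall>i\<in>I. snd (PP i) = 0" using v0 w01 unfolding PP_def by fastforce
      then show "(\<forall>i\<in>I. fst (PP i) * 0 + snd (PP i) * (T - 0) \<le> 1) \<and> 0 \<le> (0::real) \<and> 0 \<le> T" using Tp by simp
    qed
    ultimately show "\<exists>l u. feas5 m w l u \<and> obj5 C m w N a b l u > B" by blast
  qed
qed

end


lemma inner_pair2: "inner (a::real \<times> real) x = fst a * fst x + snd a * snd x"
  by (cases a, cases x) simp

context S11
begin

lemma PP_nn1: "fst (PP 1) \<ge> 0 \<and> snd (PP 1) = 0"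
  using w01[of 2] m3 w1 unfolding PP_def by (auto simp: numeral_2_eq_2)

lemma group_sum:
  fixes s :: real and mu g :: "real \<times> real \<Rightarrow> real"
  assumes "\<forall>x\<in>PP ` I. 0 \<le> mu x"
  defines "zz \<equiv> (\<lambda>i. s * mu (PP i) / real (card {i'\<in>I. PP i' = PP i}))"
  shows "(\<Sum>i\<in>I. zz i * g (PP i)) = s * (\<Sum>x\<in>PP ` I. mu x * g x)"
proof -
  have "(\<Sum>i\<in>I. zz i * g (PP i)) = (\<Sum>x\<in>PP ` I. \<Sum>i\<in>{i\<in>I. PP i = x}. zz i * g (PP i))"
    by (rule sum.group[symmetric]) auto
  also have "\<dots> = (\<Sum>x\<in>PP ` I. s * (mu x * g x))"
  proof (rule sum.cong[OF refl])
    fix x assume x: "x \<in> PP ` I"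
    have cpos: "card {i\<in>I. PP i = x} > 0" using x by (auto simp: card_gt_0_iff)
    have "(\<Sum>i\<in>{i\<in>I. PP i = x}. zz i * g (PP i)) = (\<Sum>i\<in>{i\<in>I. PP i = x}. s * mu x / real (card {i\<in>I. PP i = x}) * g x)"
      unfolding zz_def by (rule sum.cong) auto
    also have "\<dots> = real (card {i\<in>I. PP i = x}) * (s * mu x / real (card {i\<in>I. PP i = x}) * g x)"
      by (simp only: sum_constant)
    also have "\<dots> = s * (mu x * g x)"
    proof -
      have gen: "\<And>K::real. K > 0 \<Longrightarrow> K * (s * mu x / K * g x) = s * (mu x * g x)" by (simp add: field_simps)
      show ?thesis by (rule gen) (use cpos in simp)
    qed
    finally show "(\<Sum>i\<in>{i\<in>I. PP i = x}. zz i * g (PP i)) = s * (mu x * g x)" .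
  qed
  also have "\<dots> = s * (\<Sum>x\<in>PP ` I. mu x * g x)" by (simp add: sum_distrib_left)
  finally show ?thesis .
qed

lemma strong:
  assumes s: "s > 0" and all: "\<forall>z. feas4 C m w N a b z \<longrightarrow> (\<Sum>i\<in>I. z i) > s"
  shows "\<exists>l u. feas5 m w l u \<and> obj5 C m w N a b l u > s"
proof -
  define Pts where "Pts = PP ` I"
  have finP: "finite Pts" unfolding Pts_def by simp
  define HH where "HH = convex hull Pts"
  define NQ where "NQ = {x::real\<times>real. inner (1,0) x \<le> 0} \<inter> {x. inner (0,1) x \<le> 0}"
  define DD where "DD = (\<Union>c\<in>HH. \<Union>p\<in>NQ. {c + p})"
  have NQ_iff: "p \<in> NQ \<longleftrightarrow> fst p \<le> 0 \<and> snd p \<le> 0" for p unfolding NQ_def by (simp add: inner_pair2)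
  have cD: "closed DD" unfolding DD_def HH_def NQ_def
    by (intro compact_closed_sums finite_imp_compact_convex_hull finP closed_Int closed_halfspace_le)
  have vD: "convex DD" unfolding DD_def HH_def NQ_def
    by (intro convex_sums convex_convex_hull convex_Int convex_halfspace_le)
  define y0 where "y0 = (AA0 / s, BB / s)"
  have y0D: "y0 \<notin> DD"
  proof
    assume "y0 \<in> DD"
    then obtain c p where c: "c \<in> HH" and p: "p \<in> NQ" and y: "y0 = c + p" unfolding DD_def by blast
    obtain mu where mu: "\<forall>x\<in>Pts. 0 \<le> mu x" "sum mu Pts = 1" "(\<Sum>x\<in>Pts. mu x *\<^sub>R x) = c"
      using c unfolding HH_def convex_hull_finite[OF finP] by blast
    define zz where "zz = (\<lambda>i. s * mu (PP i) / real (card {i'\<in>I. PP i' = PP i}))"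
    have gs: "(\<Sum>i\<in>I. zz i * g (PP i)) = s * (\<Sum>x\<in>Pts. mu x * g x)" for g
      using group_sum[of mu s g] mu(1) unfolding zz_def Pts_def by simp
    have fc: "fst c = (\<Sum>x\<in>Pts. mu x * fst x)" and sc': "snd c = (\<Sum>x\<in>Pts. mu x * snd x)"
      using mu(3) by (auto simp: fst_sum snd_sum)
    have f1: "AA0 / s = fst c + fst p" "BB / s = snd c + snd p"
      using arg_cong[OF y, of fst] arg_cong[OF y, of snd] unfolding y0_def by auto
    have "fst p \<le> 0" "snd p \<le> 0" using p NQ_iff by auto
    then have "fst c \<ge> AA0 / s" "snd c \<ge> BB / s" using f1 by linarith+
    then have "s * fst c \<ge> AA0" "s * snd c \<ge> BB" using s by (auto simp: field_simps)
    moreover have "(\<Sum>i\<in>I. fst (PP i) * zz i) = s * fst c" using gs[of fst] fc by (simp add: mult.commute)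
    moreover have "(\<Sum>i\<in>I. snd (PP i) * zz i) = s * snd c" using gs[of snd] sc' by (simp add: mult.commute)
    moreover have "\<forall>i\<in>I. zz i \<ge> 0" unfolding zz_def using mu(1) s unfolding Pts_def by auto
    ultimately have "feas4 C m w N a b zz" unfolding feas4_iff by simp
    moreover have "(\<Sum>i\<in>I. zz i) = s" using gs[of "\<lambda>_. 1"] mu(2) by simp
    ultimately show False using all by auto
  qed
  obtain a' bb where sep: "inner a' y0 < bb" "\<forall>x\<in>DD. inner a' x > bb"
    using separating_hyperplane_closed_point[OF vD cD y0D] by blast
  define al1 where "al1 = - fst a'"
  define al2 where "al2 = - snd a'"
  define ga where "ga = - bb"
  have inD: "al1 * fst x + al2 * snd x < ga" if "x \<in> DD" for x
    using sep(2) that unfolding al1_def al2_def ga_def inner_pair2 by force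
  have iny: "al1 * fst y0 + al2 * snd y0 > ga"
    using sep(1) unfolding al1_def al2_def ga_def inner_pair2 by simp
  have one: "1 \<in> I" using m3 by auto
  have PPD: "PP i + p \<in> DD" if "i \<in> I" "fst p \<le> 0" "snd p \<le> 0" for i p
  proof -
    have "PP i \<in> HH" unfolding HH_def Pts_def using that by (intro hull_inc) auto
    moreover have "p \<in> NQ" using that NQ_iff by auto
    ultimately show ?thesis unfolding DD_def by blast
  qed
  have "PP 1 + (- PP 1) \<in> DD" by (rule PPD[OF one]) (use PP_nn1 in auto)
  then have gpos: "ga > 0" using inD by fastforce
  let ?v = "al1 * fst (PP 1) + al2 * snd (PP 1)"
  have a1: "al1 \<ge> 0"
  proof (rule ccontr)
    assume neg: "\<not> al1 \<ge> 0"
    define t where "t = (\<bar>ga\<bar> + \<bar>?v\<bar> + 1) / (- al1)"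
    have tp: "t \<ge> 0" unfolding t_def by (rule divide_nonneg_pos) (use neg in auto)
    have "PP 1 + (- t, 0) \<in> DD" using PPD[OF one, of "(- t, 0)"] tp by simp
    then have "al1 * (fst (PP 1) - t) + al2 * snd (PP 1) < ga" using inD by fastforce
    moreover have "al1 * t = - (\<bar>ga\<bar> + \<bar>?v\<bar> + 1)" unfolding t_def using neg by simp
    ultimately show False by (simp add: algebra_simps)
  qed
  have a2: "al2 \<ge> 0"
  proof (rule ccontr)
    assume neg: "\<not> al2 \<ge> 0"
    define t where "t = (\<bar>ga\<bar> + \<bar>?v\<bar> + 1) / (- al2)"
    have tp: "t \<ge> 0" unfolding t_def by (rule divide_nonneg_pos) (use neg in auto)
    have "PP 1 + (0, - t) \<in> DD" using PPD[OF one, of "(0, - t)"] tp by simp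
    then have "al1 * fst (PP 1) + al2 * (snd (PP 1) - t) < ga" using inD by fastforce
    moreover have "al2 * t = - (\<bar>ga\<bar> + \<bar>?v\<bar> + 1)" unfolding t_def using neg by simp
    ultimately show False by (simp add: algebra_simps)
  qed
  define l where "l = al1 / ga"
  define nu where "nu = al2 / ga"
  have "feas5 m w l (l + nu)" unfolding feas5_iff
  proof (intro conjI ballI)
    fix i assume i: "i \<in> I"
    have "al1 * fst (PP i) + al2 * snd (PP i) < ga" using inD PPD[OF i, of 0] by simp
    then have "(al1 * fst (PP i) + al2 * snd (PP i)) / ga < 1" using gpos by simp
    then show "fst (PP i) * l + snd (PP i) * (l + nu - l) \<le> 1" unfolding l_def nu_def
      by (simp add: add_divide_distrib algebra_simps)
  next
    show "0 \<le> l" unfolding l_def using a1 gpos by simp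
  next
    show "l \<le> l + nu" unfolding nu_def using a2 gpos by simp
  qed
  moreover have "obj5 C m w N a b l (l + nu) > s"
  proof -
    have "al1 * (AA0 / s) + al2 * (BB / s) > ga" using iny unfolding y0_def by simp
    then have "(al1 * AA0 + al2 * BB) / s > ga" by (simp add: add_divide_distrib)
    then have "al1 * AA0 + al2 * BB > ga * s" using s by (simp add: field_simps)
    then have "(al1 * AA0 + al2 * BB) / ga > s" using gpos by (simp add: field_simps)
    then show ?thesis unfolding obj5_eq l_def nu_def by (simp add: add_divide_distrib algebra_simps)
  qed
  ultimately show ?thesis by blast
qed

end


theorem theorem11:
  fixes C :: "'c set" and m :: nat and w :: "nat \<Rightarrow> real"
    and N :: "'c list \<Rightarrow> nat" and a b :: 'c
  assumes "m \<ge> 3"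
    and "card C = m"
    and "w 1 = 1" and "w m = 0"
    and "\<And>i j. 1 \<le> i \<Longrightarrow> i \<le> j \<Longrightarrow> j \<le> m \<Longrightarrow> w j \<le> w i"
    and "a \<in> C" and "b \<in> C" and "b \<noteq> a"
    and "\<And>\<alpha>. \<alpha> \<in> C \<Longrightarrow> \<alpha> \<noteq> a \<Longrightarrow> score C w N a > score C w N \<alpha>"
    and "\<And>\<alpha>. \<alpha> \<in> C \<Longrightarrow> \<alpha> \<noteq> a \<Longrightarrow> score C w N b \<ge> score C w N \<alpha>"
  shows "val2 C m w N a b = val5 C m w N a b
       \<and> val4 C m w N a b = val5 C m w N a b
       \<and> ((\<forall>B. \<exists>l u. feas5 m w l u \<and> obj5 C m w N a b l u > B)
           \<longleftrightarrow> (\<not> (\<exists>x y. feas2 C m w N a b x y) \<and> \<not> (\<exists>z. feas4 C m w N a b z)))"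
proof -
  have s11: "S11 C m w N a b" unfolding S11_def using assms by blast
  interpret S: S11 C m w N a b by (rule s11)
  have p42: "\<exists>x y. feas2 C m w N a b x y \<and> (\<Sum>t\<in>Tba C m a b. x t) = (\<Sum>i=1..m-1. z i)"
    if fz: "feas4 C m w N a b z" for z
  proof -
    have "S11z C m w N a b z" by (rule S11z.intro[OF s11]) (simp add: S11z_axioms_def fz)
    then interpret Z: S11z C m w N a b z .
    show ?thesis using Z.p4_to_p2 by blast
  qed
  have p24: "\<exists>z. feas4 C m w N a b z \<and> (\<Sum>i=1..m-1. z i) = (\<Sum>t\<in>Tba C m a b. x t)"
    if "feas2 C m w N a b x y" for x y
    using S.p2_to_p4[OF that] by blast
  have V24: "{ereal (\<Sum>t\<in>Tba C m a b. x t) | x y. feas2 C m w N a b x y}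
     = {ereal (\<Sum>i=1..m-1. z i) | z. feas4 C m w N a b z}"
  proof (intro equalityI subsetI)
    fix v assume "v \<in> {ereal (\<Sum>t\<in>Tba C m a b. x t) | x y. feas2 C m w N a b x y}"
    then obtain x y where "v = ereal (\<Sum>t\<in>Tba C m a b. x t)" "feas2 C m w N a b x y" by blast
    moreover obtain z where "feas4 C m w N a b z" "(\<Sum>i=1..m-1. z i) = (\<Sum>t\<in>Tba C m a b. x t)"
      using p24[OF \<open>feas2 C m w N a b x y\<close>] by blast
    ultimately show "v \<in> {ereal (\<Sum>i=1..m-1. z i) | z. feas4 C m w N a b z}"
      unfolding mem_Collect_eq by (intro exI[of _ z]) simp
  next
    fix v assume "v \<in> {ereal (\<Sum>i=1..m-1. z i) | z. feas4 C m w N a b z}"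
    then obtain z where "v = ereal (\<Sum>i=1..m-1. z i)" "feas4 C m w N a b z" by blast
    moreover obtain x y where "feas2 C m w N a b x y" "(\<Sum>t\<in>Tba C m a b. x t) = (\<Sum>i=1..m-1. z i)"
      using p42[OF \<open>feas4 C m w N a b z\<close>] by blast
    ultimately show "v \<in> {ereal (\<Sum>t\<in>Tba C m a b. x t) | x y. feas2 C m w N a b x y}"
      unfolding mem_Collect_eq by (intro exI[of _ x] exI[of _ y]) simp
  qed
  have v24: "val2 C m w N a b = val4 C m w N a b" unfolding val2_def val4_def V24 ..
  have feq: "(\<exists>x y. feas2 C m w N a b x y) \<longleftrightarrow> (\<exists>z. feas4 C m w N a b z)"
    using p42 p24 by blast
  have f50: "feas5 m w 0 0" unfolding feas5_def by simp
  have o50: "obj5 C m w N a b 0 0 = 0" unfolding obj5_def by simp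
  have v5nn: "val5 C m w N a b \<ge> 0"
    unfolding val5_def by (rule Sup_upper2[of 0]) (use f50 o50 in force)+
  have v45: "val4 C m w N a b = val5 C m w N a b"
  proof (cases "\<exists>z. feas4 C m w N a b z")
    case True
    have le1: "val5 C m w N a b \<le> val4 C m w N a b"
      unfolding val5_def val4_def
    proof (rule Sup_least, rule Inf_greatest)
      fix v5 v4 assume "v5 \<in> {ereal (obj5 C m w N a b l u) | l u. feas5 m w l u}"
        "v4 \<in> {ereal (\<Sum>i=1..m-1. z i) | z. feas4 C m w N a b z}"
      then obtain l u z where "v5 = ereal (obj5 C m w N a b l u)" "feas5 m w l u"
        "v4 = ereal (\<Sum>i=1..m-1. z i)" "feas4 C m w N a b z" by blast
      then show "v5 \<le> v4" using S.weak by simp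
    qed
    have le2: "val4 C m w N a b \<le> val5 C m w N a b"
    proof (rule ccontr)
      assume "\<not> val4 C m w N a b \<le> val5 C m w N a b"
      then have "val5 C m w N a b < val4 C m w N a b" by simp
      then obtain s where s: "val5 C m w N a b < ereal s" "ereal s < val4 C m w N a b"
        using ereal_dense2[of "val5 C m w N a b" "val4 C m w N a b"] by auto
      have "0 < ereal s" using v5nn s(1) by (rule le_less_trans)
      then have spos: "s > 0" by simp
      have "\<forall>z. feas4 C m w N a b z \<longrightarrow> (\<Sum>i\<in>{1..m-1}. z i) > s"
      proof (intro allI impI)
        fix z assume "feas4 C m w N a b z"
        then have "val4 C m w N a b \<le> ereal (\<Sum>i=1..m-1. z i)" unfolding val4_def
          by (intro Inf_lower) blast
        with s(2) have "ereal s < ereal (\<Sum>i=1..m-1. z i)" by (rule less_le_trans)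
        then show "(\<Sum>i\<in>{1..m-1}. z i) > s" by simp
      qed
      then obtain l u where "feas5 m w l u" "obj5 C m w N a b l u > s"
        using S.strong[OF spos] by blast
      moreover have "ereal (obj5 C m w N a b l u) \<le> val5 C m w N a b" unfolding val5_def
        by (intro Sup_upper) (use calculation in blast)
      ultimately have "ereal (obj5 C m w N a b l u) < ereal s" using s(1) by (meson le_less_trans)
      then show False using \<open>obj5 C m w N a b l u > s\<close> by simp
    qed
    show ?thesis using le1 le2 by simp
  next
    case False
    have "val4 C m w N a b = \<infinity>" unfolding val4_def using False by (simp add: top_ereal_def[symmetric])
    moreover have "val5 C m w N a b = \<infinity>"
    proof -
      have unb: "\<forall>B. \<exists>l u. feas5 m w l u \<and> obj5 C m w N a b l u > B"
        using S.infeasible_unbounded False by blast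
      have "Sup {ereal (obj5 C m w N a b l u) | l u. feas5 m w l u} = top"
      proof (subst Sup_eq_top_iff, intro allI impI)
        fix x :: ereal assume "x < top"
        then obtain r where "x \<le> ereal r" by (cases x) auto
        then obtain l u where "feas5 m w l u" "obj5 C m w N a b l u > r" using unb by blast
        moreover have "x < ereal (obj5 C m w N a b l u)"
        proof -
          have "ereal r < ereal (obj5 C m w N a b l u)" using \<open>obj5 C m w N a b l u > r\<close> by simp
          with \<open>x \<le> ereal r\<close> show ?thesis by (rule le_less_trans)
        qed
        ultimately show "\<exists>i\<in>{ereal (obj5 C m w N a b l u) | l u. feas5 m w l u}. x < i"
          by blast
      qed
      then show ?thesis unfolding val5_def top_ereal_def .
    qed
    ultimately show ?thesis by simp
  qed
  have unb_iff: "(\<forall>B. \<exists>l u. feas5 m w l u \<and> obj5 C m w N a b l u > B)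
           \<longleftrightarrow> (\<not> (\<exists>x y. feas2 C m w N a b x y) \<and> \<not> (\<exists>z. feas4 C m w N a b z))"
  proof
    assume unb: "\<forall>B. \<exists>l u. feas5 m w l u \<and> obj5 C m w N a b l u > B"
    have "\<not> (\<exists>z. feas4 C m w N a b z)"
    proof
      assume "\<exists>z. feas4 C m w N a b z"
      then obtain z where z: "feas4 C m w N a b z" by blast
      obtain l u where "feas5 m w l u" "obj5 C m w N a b l u > (\<Sum>i\<in>{1..m-1}. z i)" using unb by blast
      then show False using S.weak[OF z] by fastforce
    qed
    then show "\<not> (\<exists>x y. feas2 C m w N a b x y) \<and> \<not> (\<exists>z. feas4 C m w N a b z)" using feq by blast
  next
    assume "\<not> (\<exists>x y. feas2 C m w N a b x y) \<and> \<not> (\<exists>z. feas4 C m w N a b z)"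
    then show "\<forall>B. \<exists>l u. feas5 m w l u \<and> obj5 C m w N a b l u > B"
      using S.infeasible_unbounded by blast
  qed
  show ?thesis using v24 v45 unb_iff by simp
qed


end
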